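(* Under the assumption $\mathrm{rank}(D_{\mathrm{ac}})<n$ (the adversary does not have access to all the communication channels between the two side filters), the residual signal $res_{\mathrm{AA}}(t)=y_{\mathrm{p}}(t)-C\hat{x}^{\mathrm{AA}}(t)$ is affected by the actuator cyber attack $a_{\mathrm{u}}(t)$ and is decoupled from $a_{\mathrm{y}}(t)$, $f_1(t)$ and $f_2(t)$ (i.e. its trajectory is not affected by these signals), if the following conditions hold for $\ell=\mathrm{AA}$: 1) $T^{\ell}=I-H^{\ell}C$; 2) $(I-H^{\ell}C)F_1=0$; 3) $(I-H^{\ell}C)F_2=0$; 4) $L^{\ell}D_{\mathrm{ac}}=0$; 5) $L_{\mathrm{p}}^{\ell}D_{\mathrm{ac}}=0$; 6) $K_{\mathrm{p}}^{\mathrm{AA}}D_{\mathrm{a}}=0$; 7) the triplet $(C,F^{\ell},L^{\ell})$ is left-invertible; 8) the Rosenbrock system matrix $$P_{\Sigma_{\mathrm{u}}}(s)=\begin{bmatrix} sI-(F_{\mathrm{p}}^{\mathrm{AA}}+L_{\mathrm{p}}^{\mathrm{AA}}) & -T_{\mathrm{p}}^{\mathrm{AA}}B_{\mathrm{a}}\\ L^{\mathrm{AA}} & 0_{(n+p_{\mathrm{f}}+p)\times m_{\mathrm{a}}}\end{bmatrix}$$ does not have any non-minimum phase zero dynamics; 9) $\mathrm{rank}(L^{\mathrm{AA}}T_{\mathrm{p}}^{\mathrm{AA}}B_{\mathrm{a}})=\mathrm{rank}(T_{\mathrm{p}}^{\mathrm{AA}}B_{\mathrm{a}})$; 10) $\check{F}^{\ell}=\begin{bmatrix}F^{\ell}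 & -L^{\ell}\\ 0 & F_{\mathrm{p}}^{\ell}+L_{\mathrm{p}}^{\ell}\end{bmatrix}$ is Hurwitz.
   Context: Consider the augmented LTI cyber-physical system $\dot{x}(t)=Ax(t)+Bu(t)+B_{\mathrm{a}}a_{\mathrm{u}}(t)+F_1f_1(t)+F_2f_2(t)+N\omega(t)$, with $x(t)\in\mathbb{R}^{n+p_{\mathrm{f}}+p}$ (plant state of dimension $n$ augmented with a pseudo-actuator-fault subsystem representing sensor faults and noise), where $u(t)$ is the control command, $a_{\mathrm{u}}(t)\in\mathbb{R}^{m_{\mathrm{a}}}$ an actuator cyber attack, $f_1(t)$ an actuator fault, $f_2(t)$ a pseudo actuator fault (representing sensor faults), $\omega(t)$ noise. The plant-side measured output is $y_{\mathrm{p}}(t)=Cx(t)$ and the command-and-control (C\&C) side output is $y^*(t)=Cx(t)+D_{\mathrm{a}}a_{\mathrm{y}}(t)$ with $a_{\mathrm{y}}(t)\in\mathbb{R}^{p_{\mathrm{a}}}$ a sensor cyber attack; on the plant side the manipulated input satisfies $Bu^*(t)=Bu(t)+B_{\mathrm{a}}a_{\mathrm{u}}(t)$. For an index $\ell$, a C\&C side filter $\dot{z}_{\mathrm{c}}^{\ell}=F_{\mathrm{p}}^{\ell}z_{\mathrm{c}}^{\ell}+T_{\mathrm{p}}^{\ell}Bu+K_{\mathrm{p}}^{\ell}y^*$ and a plant side filter $\dot{z}_{\mathrm{p}}^{\ell}=F_{\mathrm{p}}^{\ell}z_{\mathrm{p}}^{\ell}+T_{\mathrm{p}}^{\ell}Bu^*+K_{\mathrm{p}}^{\ell}y_{\mathrm{p}}+L_{\mathrm{p}}^{\ell}(z_{\mathrm{p}}^{\ell}-(z_{\mathrm{c}}^{\ell}+D_{\mathrm{ac}}a_{\mathrm{c}}))$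 are used, where $a_{\mathrm{c}}(t)$ is a cyber attack on the communication link carrying $z_{\mathrm{c}}^{\ell}$ to the plant side, with signature $D_{\mathrm{ac}}$. A plant-side unknown-input-observer detector is $\dot{z}^{\ell}=F^{\ell}z^{\ell}+T^{\ell}Bu^*+K^{\ell}y_{\mathrm{p}}+L^{\ell}(z_{\mathrm{p}}^{\ell}-(z_{\mathrm{c}}^{\ell}+D_{\mathrm{ac}}a_{\mathrm{c}}))$, $\hat{x}^{\ell}=z^{\ell}+H^{\ell}y_{\mathrm{p}}$, with $K^{\ell}=K_1^{\ell}+K_2^{\ell}$, $F^{\ell}=A-H^{\ell}CA-K_1^{\ell}C$, $K_2^{\ell}=F^{\ell}H^{\ell}$. The error $e^{\ell}=x-\hat{x}^{\ell}$ and filter discrepancy $e_{\mathrm{p}}^{\ell}=z_{\mathrm{p}}^{\ell}-z_{\mathrm{c}}^{\ell}$ form the augmented error $\check{e}^{\ell}=[e^{\ell\top},e_{\mathrm{p}}^{\ell\top}]^\top$ whose state matrix is $\check{F}^{\ell}$. The residual is $res_{\ell}(t)=y_{\mathrm{p}}(t)-C\hat{x}^{\ell}(t)=Ce^{\ell}(t)$. The adversary knows all filter and detector parameters. The index $\mathrm{AA}$ denotes the filters/detector designed for actuator attack detection. *)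

theory Defs
  imports "HOL-Analysis.Analysis"
begin

definition cmat :: "real^'n^'m \<Rightarrow> complex^'n^'m" where
  "cmat M = (\<chi> i j. complex_of_real (M $ i $ j))"

definition blk :: "'a^'c1^'r1 \<Rightarrow> 'a^'c2^'r1 \<Rightarrow> 'a^'c1^'r2 \<Rightarrow> 'a^'c2^'r2
                    \<Rightarrow> 'a^('c1 + 'c2)^('r1 + 'r2)" where
  "blk P Q R S = (\<chi> i j. (case i of
       Inl i' \<Rightarrow> (case j of Inl j' \<Rightarrow> P $ i' $ j' | Inr j' \<Rightarrow> Q $ i' $ j')
     | Inr i' \<Rightarrow> (case j of Inl j' \<Rightarrow> R $ i' $ j' | Inr j' \<Rightarrow> S $ i' $ j')))"

definition normal_rank :: "(complex \<Rightarrow> complex^'n^'m) \<Rightarrow> nat" where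
  "normal_rank P = Max (range (\<lambda>s. rank (P s)))"

definition invariant_zero :: "(complex \<Rightarrow> complex^'n^'m) \<Rightarrow> complex \<Rightarrow> bool" where
  "invariant_zero P s \<longleftrightarrow> rank (P s) < normal_rank P"

(* No non-minimum-phase zero dynamics: no invariant zero in the closed right half plane *)
definition minimum_phase :: "(complex \<Rightarrow> complex^'n^'m) \<Rightarrow> bool" where
  "minimum_phase P \<longleftrightarrow> (\<forall>s. invariant_zero P s \<longrightarrow> Re s < 0)"

(* Triplet (C, Fs, G) is left-invertible: its Rosenbrock matrix has full column normal rank *)
definition left_invertible :: "real^'x^'y \<Rightarrow> real^'x^'x \<Rightarrow> real^'v^'x \<Rightarrow> bool" where
  "left_invertible C Fs G \<longleftrightarrow>
     normal_rank (\<lambda>s. blk (mat s - cmat Fs) (- cmat G) (cmat C) (0 :: complex^'v^'y))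
       = CARD('x) + CARD('v)"

definition hurwitz :: "real^'n^'n \<Rightarrow> bool" where
  "hurwitz M \<longleftrightarrow> (\<forall>s::complex. 0 \<le> Re s \<longrightarrow> det (mat s - cmat M) \<noteq> 0)"

(* Trajectories (on t >= 0) of the closed loop: plant, C&C filter, plant filter, UIO detector *)
definition cps_traj ::
  "real^'x^'x \<Rightarrow> real^'u^'x \<Rightarrow> real^'m^'x \<Rightarrow> real^'f^'x \<Rightarrow> real^'g^'x \<Rightarrow> real^'w^'x
   \<Rightarrow> real^'x^'y \<Rightarrow> real^'a^'y \<Rightarrow> real^'r^'q
   \<Rightarrow> real^'q^'q \<Rightarrow> real^'x^'q \<Rightarrow> real^'y^'q \<Rightarrow> real^'q^'q
   \<Rightarrow> real^'x^'x \<Rightarrow> real^'x^'x \<Rightarrow> real^'y^'x \<Rightarrow> real^'q^'x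
   \<Rightarrow> (real \<Rightarrow> real^'x) \<Rightarrow> (real \<Rightarrow> real^'u) \<Rightarrow> (real \<Rightarrow> real^'u) \<Rightarrow> (real \<Rightarrow> real^'m)
   \<Rightarrow> (real \<Rightarrow> real^'f) \<Rightarrow> (real \<Rightarrow> real^'g) \<Rightarrow> (real \<Rightarrow> real^'w)
   \<Rightarrow> (real \<Rightarrow> real^'a) \<Rightarrow> (real \<Rightarrow> real^'r)
   \<Rightarrow> (real \<Rightarrow> real^'q) \<Rightarrow> (real \<Rightarrow> real^'q) \<Rightarrow> (real \<Rightarrow> real^'x) \<Rightarrow> bool" where
  "cps_traj A B Ba F1 F2 N C Da Dac Fp Tp Kp Lp F T K L x u ustar au f1 f2 w ay ac zc zp z \<longleftrightarrow>
    (\<forall>t\<ge>0.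
      (x has_vector_derivative
         (A *v x t + B *v u t + Ba *v au t + F1 *v f1 t + F2 *v f2 t + N *v w t)) (at t within {0..})
    \<and> B *v ustar t = B *v u t + Ba *v au t
    \<and> (zc has_vector_derivative
         (Fp *v zc t + Tp *v (B *v u t) + Kp *v (C *v x t + Da *v ay t))) (at t within {0..})
    \<and> (zp has_vector_derivative
         (Fp *v zp t + Tp *v (B *v ustar t) + Kp *v (C *v x t)
          + Lp *v (zp t - (zc t + Dac *v ac t)))) (at t within {0..})
    \<and> (z has_vector_derivative
         (F *v z t + T *v (B *v ustar t) + K *v (C *v x t)
          + L *v (zp t - (zc t + Dac *v ac t)))) (at t within {0..}))"

(* residual res(t) = y_p(t) - C xhat(t), with xhat = z + H y_p, y_p = C x *)
definition residual :: "real^'x^'y \<Rightarrow> real^'y^'x \<Rightarrow> (real \<Rightarrow> real^'x) \<Rightarrow> (real \<Rightarrow> real^'x)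
                        \<Rightarrow> real \<Rightarrow> real^'y" where
  "residual C H x z t = C *v x t - C *v (z t + H *v (C *v x t))"

end

theory Submission
  imports Defs
begin


lemma gronwall_zero:
  fixes d :: "real \<Rightarrow> 'a::real_inner" and K :: real
  assumes der: "\<And>t. t \<ge> 0 \<Longrightarrow> (d has_vector_derivative d' t) (at t within {0..})"
    and bnd: "\<And>t. t \<ge> 0 \<Longrightarrow> norm (d' t) \<le> K * norm (d t)"
    and d0: "d 0 = 0"
    and t: "t \<ge> 0"
  shows "d t = 0"
proof -
  define g where "g s = exp (- (2*K) * s) * (d s \<bullet> d s)" for s
  define g' where "g' s = exp (- (2*K) * s) * (2 * (d s \<bullet> d' s)) + (- (2*K)) * exp (- (2*K) * s) * (d s \<bullet> d s)" for s
  have gd: "(g has_vector_derivative g' s) (at s within {0..t})" if "s \<in> {0..t}" for s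
  proof -
    have ds: "(d has_vector_derivative d' s) (at s within {0..t})"
      using der[of s] that by (auto intro: has_vector_derivative_within_subset)
    have "((\<lambda>x. d x \<bullet> d x) has_derivative (\<lambda>h. h * (2 * (d s \<bullet> d' s)))) (at s within {0..t})"
      using has_derivative_inner[OF ds[unfolded has_vector_derivative_def] ds[unfolded has_vector_derivative_def]]
      by (simp add: algebra_simps inner_commute)
    then have i: "((\<lambda>s. d s \<bullet> d s) has_real_derivative (2 * (d s \<bullet> d' s))) (at s within {0..t})"
      unfolding has_field_derivative_def by (metis mult_commute_abs)
    have e: "((\<lambda>s. exp (- (2*K) * s)) has_real_derivative (- (2*K)) * exp (- (2*K) * s)) (at s within {0..t})"
      by (auto intro!: derivative_eq_intros)
    show ?thesis unfolding g_def g'_def has_real_derivative_iff_has_vector_derivative[symmetric]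
      using DERIV_mult[OF e i] by (simp add: algebra_simps)
  qed
  have "(g' has_integral (g t - g 0)) {0..t}"
    by (rule fundamental_theorem_of_calculus[OF t gd]) 
  moreover have "g' s \<le> 0" if "s \<in> {0..t}" for s
  proof -
    have "d s \<bullet> d' s \<le> norm (d s) * norm (d' s)" by (rule norm_cauchy_schwarz)
    also have "\<dots> \<le> norm (d s) * (K * norm (d s))"
      using bnd[of s] that by (auto intro: mult_left_mono)
    also have "\<dots> = K * (d s \<bullet> d s)" by (simp add: power2_norm_eq_inner[symmetric] power2_eq_square)
    finally have "d s \<bullet> d' s - K * (d s \<bullet> d s) \<le> 0" by simp
    then have "exp (- (2*K) * s) * (2 * (d s \<bullet> d' s - K * (d s \<bullet> d s))) \<le> 0"
      by (simp add: mult_nonneg_nonpos)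
    then show ?thesis unfolding g'_def by (simp add: algebra_simps)
  qed
  ultimately have "g t - g 0 \<le> 0"
    using has_integral_le[of g' "g t - g 0" "{0..t}" "\<lambda>_. 0" 0] by (auto simp: has_integral_0)
  then have "d t \<bullet> d t \<le> 0" using d0 unfolding g_def
    by (simp add: mult_le_0_iff)
  then show ?thesis by (metis inner_eq_zero_iff inner_ge_zero order_antisym)
qed



lemma mv_deriv:
  "(f has_vector_derivative f') F \<Longrightarrow> ((\<lambda>s. (M::real^'a^'b) *v f s) has_vector_derivative M *v f') F"
  by (rule bounded_linear.has_vector_derivative[OF matrix_vector_mul_bounded_linear])

lemmas mvsimps = matrix_vector_mult_diff_rdistrib matrix_vector_mult_add_rdistrib
  matrix_vector_mul_assoc[symmetric] matrix_vector_right_distrib matrix_vector_mult_diff_distrib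
  matrix_vector_mul_lid

lemma e_deriv:
  fixes A :: "real^'x^'x" and B :: "real^'u^'x" and Ba :: "real^'m^'x"
    and F1 :: "real^'f^'x" and F2 :: "real^'g^'x" and N :: "real^'w^'x"
    and C :: "real^'x^'y" and Dac :: "real^'r^'q"
    and F :: "real^'x^'x" and T :: "real^'x^'x" and K K1 K2 H :: "real^'y^'x"
    and L :: "real^'q^'x"
  assumes F_def: "F = A - H ** C ** A - K1 ** C"
    and K2_def: "K2 = F ** H"
    and K_def: "K = K1 + K2"
    and c1: "T = mat 1 - H ** C"
    and c2: "(mat 1 - H ** C) ** F1 = 0"
    and c3: "(mat 1 - H ** C) ** F2 = 0"
    and c4: "L ** Dac = 0"
    and hx: "(x has_vector_derivative (A *v x t + B *v u t + Ba *v au t + F1 *v f1 t + F2 *v f2 t + N *v w t)) (at t within S)"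
    and hus: "B *v us t = B *v u t + Ba *v au t"
    and hz: "(z has_vector_derivative (F *v z t + T *v (B *v us t) + K *v (C *v x t) + L *v (zp t - (zc t + Dac *v ac t)))) (at t within S)"
  shows "((\<lambda>s. x s - (z s + H *v (C *v x s))) has_vector_derivative
     (F *v (x t - (z t + H *v (C *v x t))) - L *v (zp t - zc t) + (N *v w t - H *v (C *v (N *v w t))))) (at t within S)"
proof -
  have D: "((\<lambda>s. x s - (z s + H *v (C *v x s))) has_vector_derivative
     ((A *v x t + B *v u t + Ba *v au t + F1 *v f1 t + F2 *v f2 t + N *v w t) -
      ((F *v z t + T *v (B *v us t) + K *v (C *v x t) + L *v (zp t - (zc t + Dac *v ac t)))
      + H *v (C *v (A *v x t + B *v u t + Ba *v au t + F1 *v f1 t + F2 *v f2 t + N *v w t))))) (at t within S)"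
    by (intro has_vector_derivative_diff has_vector_derivative_add mv_deriv hx hz)
  have e2: "F1 *v f1 t - H *v (C *v (F1 *v f1 t)) = 0"
    using arg_cong[OF c2, of "\<lambda>M. M *v f1 t"] by (simp add: mvsimps)
  have e3: "F2 *v f2 t - H *v (C *v (F2 *v f2 t)) = 0"
    using arg_cong[OF c3, of "\<lambda>M. M *v f2 t"] by (simp add: mvsimps)
  have e4: "L *v (Dac *v ac t) = 0"
    using arg_cong[OF c4, of "\<lambda>M. M *v ac t"] by (simp add: mvsimps)
  have hus': "T *v (B *v us t) = (B *v u t + Ba *v au t) - H *v (C *v (B *v u t + Ba *v au t))"
    unfolding hus c1 by (simp add: mvsimps)
  show ?thesis
    apply (rule has_vector_derivative_eq_rhs[OF D])
    unfolding hus' K_def K2_def 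
    using e2 e3 e4 unfolding F_def
    by (simp add: mvsimps algebra_simps)
qed

lemma ep_deriv:
  fixes B :: "real^'u^'x" and Ba :: "real^'m^'x"
    and C :: "real^'x^'y" and Da :: "real^'a^'y" and Dac :: "real^'r^'q"
    and Fp :: "real^'q^'q" and Tp :: "real^'x^'q" and Kp :: "real^'y^'q" and Lp :: "real^'q^'q"
  assumes c5: "Lp ** Dac = 0"
    and c6: "Kp ** Da = 0"
    and hus: "B *v us t = B *v u t + Ba *v au t"
    and hzc: "(zc has_vector_derivative
         (Fp *v zc t + Tp *v (B *v u t) + Kp *v (C *v x t + Da *v ay t))) (at t within S)"
    and hzp: "(zp has_vector_derivative
         (Fp *v zp t + Tp *v (B *v us t) + Kp *v (C *v x t)
          + Lp *v (zp t - (zc t + Dac *v ac t)))) (at t within S)"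
  shows "((\<lambda>s. zp s - zc s) has_vector_derivative ((Fp + Lp) *v (zp t - zc t) + Tp *v (Ba *v au t))) (at t within S)"
proof -
  have e5: "Lp *v (Dac *v ac t) = 0"
    using arg_cong[OF c5, of "\<lambda>M. M *v ac t"] by (simp add: mvsimps)
  have e6: "Kp *v (Da *v ay t) = 0"
    using arg_cong[OF c6, of "\<lambda>M. M *v ay t"] by (simp add: mvsimps)
  show ?thesis
    apply (rule has_vector_derivative_eq_rhs[OF has_vector_derivative_diff[OF hzp hzc]])
    unfolding hus using e5 e6
    by (simp add: mvsimps algebra_simps)
qed



lemma dim_image_lt:
  fixes f :: "'a::euclidean_space \<Rightarrow> 'b::euclidean_space"
  assumes lf: "linear f" and S: "subspace S" and z0: "z0 \<in> S" "z0 \<noteq> 0" "f z0 = 0"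
  shows "dim (f ` S) < dim S"
proof -
  have "{z0} \<subseteq> S" "independent {z0}" using z0 by auto
  then obtain B where B: "{z0} \<subseteq> B" "B \<subseteq> S" "independent B" "S \<subseteq> span B"
    using maximal_independent_subset_extend by metis
  have fin: "finite B" using B(3) by (rule finiteI_independent)
  have cB: "card B = dim S" using basis_card_eq_dim[OF B(2) B(4) B(3)] .
  have "f ` S \<subseteq> span (f ` (B - {z0}))"
  proof
    fix y assume "y \<in> f ` S"
    then obtain x where x: "x \<in> S" "y = f x" by auto
    have "y \<in> f ` span B" using x B(4) by auto
    also have "\<dots> = span (f ` B)" using span_linear_image[OF lf] by simp
    also have "\<dots> \<subseteq> span (insert 0 (f ` (B - {z0})))"
      by (rule span_mono) (use z0 in auto)
    also have "\<dots> = span (f ` (B - {z0}))" by simp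
    finally show "y \<in> span (f ` (B - {z0}))" .
  qed
  then have "dim (f ` S) \<le> card (f ` (B - {z0}))"
    by (rule dim_le_card) (use fin in auto)
  also have "\<dots> \<le> card (B - {z0})" by (rule card_image_le) (use fin in auto)
  also have "\<dots> < card B" using fin B(1) by (meson card_Diff1_less insert_subset)
  finally show ?thesis using cB by simp
qed

lemma rank_lt_of_kernel:
  fixes A :: "'a::field^'n^'m"
  assumes x: "x \<noteq> 0" "A *v x = 0"
  shows "rank A < CARD('n)"
proof -
  obtain k where xk: "x $ k \<noteq> 0" using x(1) by (metis vec_eq_iff zero_index)
  define W where "W = {r::'a^'n. (\<Sum>j\<in>UNIV. r $ j * x $ j) = 0}"
  have sub: "vec.subspace W"
    unfolding vec.subspace_def W_def
    apply (auto simp: sum.distrib distrib_right)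
    by (simp add: mult.assoc flip: sum_distrib_left)
  have rows: "rows A \<subseteq> W"
  proof
    fix r assume "r \<in> rows A"
    then obtain i where r: "r = row i A" by (auto simp: rows_def)
    have "(A *v x) $ i = 0" using x(2) by simp
    then show "r \<in> W" unfolding W_def r
      by (simp add: matrix_vector_mult_def row_def)
  qed
  have eq: "\<And>j. axis k 1 $ j * x $ j = (if j = k then x $ j else 0)" by (simp add: axis_def)
  have ax: "axis k 1 \<notin> W" using xk unfolding W_def by (simp add: eq)
  have "rank A = vec.dim (rows A)" by (simp add: row_rank_def_gen)
  also have "\<dots> \<le> vec.dim W" by (rule vec.dim_subset[OF rows])
  also have "\<dots> < vec.dim (UNIV :: ('a^'n) set)"
  proof (rule vec.dim_psubset)
    show "vec.span W \<subset> vec.span UNIV"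
      using sub ax by (auto simp: vec.span_eq_iff[THEN iffD2])
  qed
  also have "\<dots> = CARD('n)" by (rule vec_dim_card)
  finally show ?thesis .
qed

lemma not_bot_at_Ici:
  fixes t :: real assumes "t \<ge> 0" shows "at t within {0..} \<noteq> bot"
proof -
  have "at t within {t..t+1} \<noteq> bot"
    by (simp add: at_within_Icc_at_right)
  moreover have "at t within {t..t+1} \<le> at t within {0..}"
    using assms by (intro at_le) auto
  ultimately show ?thesis by (metis bot.extremum_uniqueI)
qed

lemma deriv_in_span:
  fixes e :: "real \<Rightarrow> 'a::euclidean_space"
  assumes t: "t \<ge> 0" and d: "(e has_vector_derivative e') (at t within {0..})"
  shows "e' \<in> span (e ` {0..})"
proof -
  obtain y z where yz: "y \<in> span (e ` {0..})" "\<And>w. w \<in> span (e ` {0..}) \<Longrightarrow> orthogonal z w"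
    "e' = y + z"
    using orthogonal_subspace_decomp_exists by metis
  have d1: "((\<lambda>s. z \<bullet> e s) has_vector_derivative z \<bullet> e') (at t within {0..})"
    using bounded_linear.has_vector_derivative[OF bounded_linear_inner_right d] .
  have d2: "((\<lambda>s. 0::real) has_vector_derivative z \<bullet> e') (at t within {0..})"
    apply (rule has_vector_derivative_transform[OF _ _ d1])
    using t yz(2) by (auto simp: orthogonal_def intro: span_base)
  have "z \<bullet> e' = 0"
    using vector_derivative_unique_within[OF not_bot_at_Ici[OF t] d2 has_vector_derivative_const] .
  moreover have "z \<bullet> y = 0" using yz(2)[OF yz(1)] by (simp add: orthogonal_def)
  ultimately have "z \<bullet> z = 0" using yz(3) by (simp add: inner_add_right)
  then have "z = 0" by simp
  then show ?thesis using yz by simp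
qed

lemma sum_UNIV_sum:
  "sum g (UNIV::('a::finite + 'b::finite) set) = (\<Sum>a\<in>UNIV. g (Inl a)) + (\<Sum>b\<in>UNIV. g (Inr b))"
  by (subst UNIV_sum, subst sum.union_disjoint) (auto simp: sum.reindex)

lemma blk_mv:
  "blk P Q R S *v (\<chi> j. case j of Inl a \<Rightarrow> w1 $ a | Inr b \<Rightarrow> w2 $ b) =
   (\<chi> i. case i of Inl a \<Rightarrow> (P *v w1 + Q *v w2) $ a | Inr b \<Rightarrow> (R *v w1 + S *v w2) $ b)"
  unfolding vec_eq_iff
  apply (rule allI)
  subgoal for i by (cases i) (simp_all add: matrix_vector_mult_def blk_def sum_UNIV_sum)
  done

lemma cmat_mv:
  fixes M :: "real^'n^'m"
  shows "cmat M *v (\<chi> j. Complex (p $ j) (q $ j)) = (\<chi> i. Complex ((M *v p) $ i) ((M *v q) $ i))"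
  by (simp add: vec_eq_iff matrix_vector_mult_def cmat_def complex_eq_iff Re_sum Im_sum)

lemma mat_mv: "mat s *v (v::'a::comm_ring_1^'n) = (\<chi> i. s * v $ i)"
proof -
  have "\<And>i j. (if i = j then s else 0) * v $ j = (if i = j then s * v $ j else 0)" by simp
  then show ?thesis by (simp add: vec_eq_iff matrix_vector_mult_def mat_def)
qed



lemma neg_mv: "(- M) *v v = - (M *v (v::'a::comm_ring_1^'n))"
  by (simp add: vec_eq_iff matrix_vector_mult_def sum_negf)

lemma li_zero:
  fixes C :: "real^'x^'y" and F :: "real^'x^'x" and L :: "real^'q^'x"
    and e :: "real \<Rightarrow> real^'x" and ep :: "real \<Rightarrow> real^'q"
  assumes li: "left_invertible C F L"
    and de: "\<And>t. t \<ge> 0 \<Longrightarrow> (e has_vector_derivative (F *v e t - L *v ep t)) (at t within {0..})"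
    and ce: "\<And>t. t \<ge> 0 \<Longrightarrow> C *v e t = 0"
    and e0: "e 0 = 0"
    and t: "t \<ge> 0"
  shows "ep t = 0"
proof -
  define V where "V = span (e ` {0..})"
  define Z where "Z = span ((\<lambda>s. (e s, ep s)) ` {0..})"
  have subV: "subspace V" and subZ: "subspace Z" by (simp_all add: V_def Z_def subspace_span)
  have linfst: "linear (fst :: (real^'x) \<times> (real^'q) \<Rightarrow> real^'x)"
    by (rule bounded_linear.linear[OF bounded_linear_fst])
  have fstZ: "fst ` Z = V"
    unfolding Z_def V_def span_linear_image[OF linfst, symmetric] by (simp add: image_image)
  have Z1: "C *v fst z = 0" if "z \<in> Z" for z
  proof -
    have "Z \<subseteq> {z. C *v fst z = 0}" unfolding Z_def
    proof (rule span_minimal)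
      show "(\<lambda>s. (e s, ep s)) ` {0..} \<subseteq> {z. C *v fst z = 0}" using ce by auto
      show "subspace {z. C *v fst z = 0}"
        by (auto simp: subspace_def matrix_vector_right_distrib matrix_vector_mult_scaleR)
    qed
    then show ?thesis using that by auto
  qed
  have Z2: "F *v fst z - L *v snd z \<in> V" if "z \<in> Z" for z
  proof -
    have "Z \<subseteq> {z. F *v fst z - L *v snd z \<in> V}" unfolding Z_def
    proof (rule span_minimal)
      show "(\<lambda>s. (e s, ep s)) ` {0..} \<subseteq> {z. F *v fst z - L *v snd z \<in> V}"
        using deriv_in_span[OF _ de] unfolding V_def by auto
      show "subspace {z. F *v fst z - L *v snd z \<in> V}"
        unfolding subspace_def
      proof safe
        show "F *v fst 0 - L *v snd 0 \<in> V" using subV by (simp add: subspace_0)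
      next
        fix x y :: "(real^'x) \<times> (real^'q)"
        assume "F *v fst x - L *v snd x \<in> V" "F *v fst y - L *v snd y \<in> V"
        then have "(F *v fst x - L *v snd x) + (F *v fst y - L *v snd y) \<in> V"
          using subV by (simp add: subspace_add)
        then show "F *v fst (x + y) - L *v snd (x + y) \<in> V"
          by (simp add: matrix_vector_right_distrib algebra_simps)
      next
        fix c :: real and x :: "(real^'x) \<times> (real^'q)"
        assume "F *v fst x - L *v snd x \<in> V"
        then have "c *\<^sub>R (F *v fst x - L *v snd x) \<in> V"
          using subV by (simp add: subspace_scale)
        then show "F *v fst (c *\<^sub>R x) - L *v snd (c *\<^sub>R x) \<in> V"
          by (simp add: matrix_vector_mult_scaleR scaleR_diff_right)
      qed
    qed
    then show ?thesis using that by auto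
  qed
  have gen: "(e s, ep s) \<in> Z" if "s \<ge> 0" for s
    unfolding Z_def using that by (auto intro: span_base)
  show ?thesis
  proof (cases "\<exists>z0\<in>Z. z0 \<noteq> 0 \<and> fst z0 = 0")
    case False
    obtain eps where eps: "eps > 0" "\<And>z. z \<in> Z \<Longrightarrow> norm (fst z) \<ge> eps * norm z"
      using injective_imp_isometric[OF closed_subspace[OF subZ] subZ bounded_linear_fst] False by auto
    have epb: "norm (ep s) \<le> norm (e s) / eps" if "s \<ge> 0" for s
    proof -
      have "eps * norm (ep s) \<le> eps * norm (e s, ep s)"
        using eps(1) norm_snd_le by (simp add: mult_left_mono)
      also have "\<dots> \<le> norm (e s)" using eps(2)[OF gen[OF that]] by simp
      finally show ?thesis using eps(1) by (simp add: field_simps)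
    qed
    obtain KF where KF: "\<And>v. norm (F *v v) \<le> norm v * KF"
      using bounded_linear.bounded[OF matrix_vector_mul_bounded_linear] by blast
    obtain KL where KL: "KL > 0" "\<And>v. norm (L *v v) \<le> norm v * KL"
      using bounded_linear.pos_bounded[OF matrix_vector_mul_bounded_linear] by blast
    have bnd: "norm (F *v e s - L *v ep s) \<le> (KF + KL / eps) * norm (e s)" if "s \<ge> 0" for s
    proof -
      have "norm (F *v e s - L *v ep s) \<le> norm (F *v e s) + norm (L *v ep s)" by (rule norm_triangle_ineq4)
      also have "\<dots> \<le> norm (e s) * KF + norm (ep s) * KL" using KF KL(2) by (intro add_mono) auto
      also have "\<dots> \<le> norm (e s) * KF + (norm (e s) / eps) * KL"
        using epb[OF that] KL(1) by (intro add_left_mono mult_right_mono) auto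
      finally show ?thesis by (simp add: algebra_simps)
    qed
    have "e s = 0" if "s \<ge> 0" for s
      by (rule gronwall_zero[OF de bnd e0 that])
    then have "norm (ep t) \<le> 0" using epb[OF t] t by simp
    then show ?thesis by simp
  next
    case True
    then obtain z0 where z0: "z0 \<in> Z" "z0 \<noteq> 0" "fst z0 = 0" by blast
    have dlt: "dim V < dim Z"
      using dim_image_lt[OF linfst subZ z0] fstZ by simp
    define P where "P s = blk (mat s - cmat F) (- cmat L) (cmat C) (0 :: complex^'q^'y)" for s
    have rk: "rank (P s) < CARD('x + 'q)" for s
    proof -
      define a where "a = Re s"
      define b where "b = Im s"
      define \<Phi> where "\<Phi> z = F *v fst z - L *v snd z" for z :: "(real^'x) \<times> (real^'q)"
      define \<Xi> where "\<Xi> p = (a *\<^sub>R fst (fst p) - b *\<^sub>R fst (snd p) - \<Phi> (fst p),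
                               b *\<^sub>R fst (fst p) + a *\<^sub>R fst (snd p) - \<Phi> (snd p))"
        for p :: "((real^'x) \<times> (real^'q)) \<times> ((real^'x) \<times> (real^'q))"
      have linX: "linear \<Xi>"
        by (rule linearI) (auto simp: \<Xi>_def \<Phi>_def algebra_simps matrix_vector_right_distrib matrix_vector_mult_scaleR)
      have subW: "subspace (Z \<times> Z)" using subZ by (simp add: subspace_Times)
      have "\<exists>p\<in>Z \<times> Z. p \<noteq> 0 \<and> \<Xi> p = 0"
      proof (rule ccontr)
        assume "\<not> ?thesis"
        then have "inj_on \<Xi> (Z \<times> Z)"
          using linear_inj_on_iff_eq_0[OF linX subW] by blast
        then have "dim (\<Xi> ` (Z \<times> Z)) = dim (Z \<times> Z)"
          using dim_image_eq[OF linX, of "Z \<times> Z"] span_eq_iff[THEN iffD2, OF subW] by metis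
        also have "\<dots> = dim Z + dim Z" using subZ by (simp add: dim_Times)
        finally have eq: "dim (\<Xi> ` (Z \<times> Z)) = dim Z + dim Z" .
        have "\<Xi> ` (Z \<times> Z) \<subseteq> V \<times> V"
        proof
          fix p assume "p \<in> \<Xi> ` (Z \<times> Z)"
          then obtain z1 z2 where zz: "z1 \<in> Z" "z2 \<in> Z" "p = \<Xi> (z1, z2)" by auto
          have f1: "fst z1 \<in> V" "fst z2 \<in> V" using zz fstZ by auto
          have p1: "\<Phi> z1 \<in> V" "\<Phi> z2 \<in> V" using Z2 zz unfolding \<Phi>_def by auto
          have "fst p \<in> V" "snd p \<in> V"
            unfolding zz(3) \<Xi>_def using f1 p1 subV
            by (simp_all add: subspace_diff subspace_add subspace_scale)
          then show "p \<in> V \<times> V" by (simp add: mem_Times_iff)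
        qed
        then have "dim (\<Xi> ` (Z \<times> Z)) \<le> dim (V \<times> V)" by (rule dim_subset)
        also have "\<dots> = dim V + dim V" using subV by (simp add: dim_Times)
        finally show False using eq dlt by simp
      qed
      then obtain z1 z2 where zz: "z1 \<in> Z" "z2 \<in> Z" "(z1, z2) \<noteq> 0" "\<Xi> (z1, z2) = 0" by auto
      define vc where "vc = (\<chi> j. Complex (fst z1 $ j) (fst z2 $ j))"
      define uc where "uc = (\<chi> j. Complex ((- snd z1) $ j) ((- snd z2) $ j))"
      define w where "w = (\<chi> j. case j of Inl a \<Rightarrow> vc $ a | Inr b \<Rightarrow> uc $ b)"
      have X1: "a *\<^sub>R fst z1 - b *\<^sub>R fst z2 - (F *v fst z1 - L *v snd z1) = 0"
        and X2: "b *\<^sub>R fst z1 + a *\<^sub>R fst z2 - (F *v fst z2 - L *v snd z2) = 0"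
        using zz(4) unfolding \<Xi>_def \<Phi>_def by (simp_all add: zero_prod_def del: diff_eq_diff_eq)
      have C1: "C *v fst z1 = 0" "C *v fst z2 = 0" using Z1 zz by auto
      have s: "s = Complex a b" unfolding a_def b_def by simp
      have top: "((mat s - cmat F) *v vc + (- cmat L) *v uc) = 0"
      proof -
        have "((mat s - cmat F) *v vc + (- cmat L) *v uc) = mat s *v vc - cmat F *v vc - cmat L *v uc"
          by (simp add: matrix_vector_mult_diff_rdistrib neg_mv)
        also have "\<dots> = 0"
          unfolding vc_def uc_def cmat_mv mat_mv
          using X1 X2 unfolding s
          apply (simp add: vec_eq_iff complex_eq_iff matrix_vector_mult_def sum_negf)
          apply (intro allI)
          subgoal for i apply (erule allE[of _ i])+ by linarith
          done
        finally show ?thesis .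
      qed
      have bot: "cmat C *v vc + (0::complex^'q^'y) *v uc = 0"
        unfolding vc_def cmat_mv using C1 by (simp add: vec_eq_iff complex_eq_iff)
      have "P s *v w = (\<chi> i. case i of Inl a \<Rightarrow> (0::complex^'x) $ a | Inr b \<Rightarrow> (0::complex^'y) $ b)"
        unfolding P_def w_def blk_mv top bot by (simp only:)
      also have "\<dots> = 0" by (simp add: vec_eq_iff split: sum.split)
      finally have Pw: "P s *v w = 0" .
      have wnz: "w \<noteq> 0"
      proof
        assume w0: "w = 0"
        have "vc $ j = 0" for j using arg_cong[OF w0, of "\<lambda>v. v $ Inl j"] by (simp add: w_def)
        moreover have "uc $ j = 0" for j using arg_cong[OF w0, of "\<lambda>v. v $ Inr j"] by (simp add: w_def)
        ultimately have "vc = 0" "uc = 0" by (simp_all add: vec_eq_iff)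
        then have "fst z1 = 0" "fst z2 = 0" "snd z1 = 0" "snd z2 = 0"
          unfolding vc_def uc_def by (auto simp: vec_eq_iff complex_eq_iff)
        then show False using zz(3) by (simp add: prod_eq_iff)
      qed
      show ?thesis by (rule rank_lt_of_kernel[OF wnz Pw])
    qed
    have "normal_rank P < CARD('x + 'q)"
      unfolding normal_rank_def
    proof (subst Max_less_iff)
      show "finite (range (\<lambda>s. rank (P s)))"
        by (rule finite_subset[of _ "{..<CARD('x + 'q)}"]) (use rk in auto)
    qed (use rk in auto)
    then show ?thesis using li unfolding left_invertible_def P_def by simp
  qed
qed



lemma part1:
  fixes A :: "real^'x^'x" and B :: "real^'u^'x" and Ba :: "real^'m^'x"
    and F1 :: "real^'f^'x" and F2 :: "real^'g^'x" and N :: "real^'w^'x"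
    and C :: "real^'x^'y" and Da :: "real^'a^'y" and Dac :: "real^'r^'q"
    and Fp :: "real^'q^'q" and Tp :: "real^'x^'q" and Kp :: "real^'y^'q" and Lp :: "real^'q^'q"
    and F :: "real^'x^'x" and T :: "real^'x^'x" and K K1 K2 H :: "real^'y^'x"
    and L :: "real^'q^'x"
  assumes F_def: "F = A - H ** C ** A - K1 ** C"
    and K2_def: "K2 = F ** H"
    and K_def: "K = K1 + K2"
    and c1: "T = mat 1 - H ** C"
    and c2: "(mat 1 - H ** C) ** F1 = 0"
    and c3: "(mat 1 - H ** C) ** F2 = 0"
    and c4: "L ** Dac = 0"
    and c5: "Lp ** Dac = 0"
    and c6: "Kp ** Da = 0"
    and T1: "cps_traj A B Ba F1 F2 N C Da Dac Fp Tp Kp Lp F T K L x u ustar au f1 f2 w ay ac zc zp z"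
    and T2: "cps_traj A B Ba F1 F2 N C Da Dac Fp Tp Kp Lp F T K L x' u ustar' au f1' f2' w ay' ac zc' zp' z'"
    and i1: "x' 0 = x 0" and i2: "zc' 0 = zc 0" and i3: "zp' 0 = zp 0" and i4: "z' 0 = z 0"
    and t: "t \<ge> 0"
  shows "residual C H x' z' t = residual C H x z t"
proof -
  define e1 where "e1 s = x s - (z s + H *v (C *v x s))" for s
  define e2 where "e2 s = x' s - (z' s + H *v (C *v x' s))" for s
  define d where "d s = (e2 s - e1 s, (zp' s - zc' s) - (zp s - zc s))" for s
  define M where "M p = (F *v fst p - L *v snd p, (Fp + Lp) *v snd p)" for p :: "(real^'x) \<times> (real^'q)"
  have linM: "linear M"
    by (rule linearI) (auto simp: M_def algebra_simps matrix_vector_right_distrib matrix_vector_mult_scaleR)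
  obtain KM where KM: "\<And>v. norm (M v) \<le> norm v * KM"
    using bounded_linear.bounded[OF linear_conv_bounded_linear[THEN iffD1, OF linM]] by blast
  have dd: "(d has_vector_derivative M (d s)) (at s within {0..})" if s: "s \<ge> 0" for s
  proof -
    have h1: "(x has_vector_derivative (A *v x s + B *v u s + Ba *v au s + F1 *v f1 s + F2 *v f2 s + N *v w s)) (at s within {0..})"
      "B *v ustar s = B *v u s + Ba *v au s"
      "(zc has_vector_derivative (Fp *v zc s + Tp *v (B *v u s) + Kp *v (C *v x s + Da *v ay s))) (at s within {0..})"
      "(zp has_vector_derivative (Fp *v zp s + Tp *v (B *v ustar s) + Kp *v (C *v x s)
          + Lp *v (zp s - (zc s + Dac *v ac s)))) (at s within {0..})"
      "(z has_vector_derivative (F *v z s + T *v (B *v ustar s) + K *v (C *v x s)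
          + L *v (zp s - (zc s + Dac *v ac s)))) (at s within {0..})"
      using T1 s unfolding cps_traj_def by auto
    have h2: "(x' has_vector_derivative (A *v x' s + B *v u s + Ba *v au s + F1 *v f1' s + F2 *v f2' s + N *v w s)) (at s within {0..})"
      "B *v ustar' s = B *v u s + Ba *v au s"
      "(zc' has_vector_derivative (Fp *v zc' s + Tp *v (B *v u s) + Kp *v (C *v x' s + Da *v ay' s))) (at s within {0..})"
      "(zp' has_vector_derivative (Fp *v zp' s + Tp *v (B *v ustar' s) + Kp *v (C *v x' s)
          + Lp *v (zp' s - (zc' s + Dac *v ac s)))) (at s within {0..})"
      "(z' has_vector_derivative (F *v z' s + T *v (B *v ustar' s) + K *v (C *v x' s)
          + L *v (zp' s - (zc' s + Dac *v ac s)))) (at s within {0..})"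
      using T2 s unfolding cps_traj_def by auto
    note E1 = e_deriv[where x=x and z=z and t=s and u=u and au=au and ?f1.0=f1 and ?f2.0=f2 and w=w and us=ustar and zp=zp and zc=zc and ac=ac, OF F_def K2_def K_def c1 c2 c3 c4 h1(1) h1(2) h1(5)]
    note E2 = e_deriv[where x=x' and z=z' and t=s and u=u and au=au and ?f1.0=f1' and ?f2.0=f2' and w=w and us=ustar' and zp=zp' and zc=zc' and ac=ac, OF F_def K2_def K_def c1 c2 c3 c4 h2(1) h2(2) h2(5)]
    note P1 = ep_deriv[where x=x and t=s and u=u and au=au and us=ustar and zp=zp and zc=zc and ac=ac and ay=ay, OF c5 c6 h1(2) h1(3) h1(4)]
    note P2 = ep_deriv[where x=x' and t=s and u=u and au=au and us=ustar' and zp=zp' and zc=zc' and ac=ac and ay=ay', OF c5 c6 h2(2) h2(3) h2(4)]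
    show ?thesis
      unfolding d_def
      apply (rule has_vector_derivative_eq_rhs)
       apply (rule has_vector_derivative_Pair)
        apply (rule has_vector_derivative_diff[OF E2[folded e2_def] E1[folded e1_def]])
       apply (rule has_vector_derivative_diff[OF P2 P1])
      by (simp add: M_def e1_def e2_def algebra_simps matrix_vector_right_distrib matrix_vector_mult_diff_distrib)
  qed
  have bnd: "norm (M (d s)) \<le> KM * norm (d s)" for s using KM[of "d s"] by (simp add: mult.commute)
  have d0: "d 0 = 0" unfolding d_def e1_def e2_def using i1 i2 i3 i4 by (simp add: zero_prod_def)
  have "d t = 0" by (rule gronwall_zero[OF dd bnd d0 t])
  then have "e2 t = e1 t" unfolding d_def by (simp add: zero_prod_def)
  then show ?thesis unfolding residual_def e1_def e2_def
    by (metis matrix_vector_mult_diff_distrib)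
qed

lemma part2:
  fixes A :: "real^'x^'x" and B :: "real^'u^'x" and Ba :: "real^'m^'x"
    and F1 :: "real^'f^'x" and F2 :: "real^'g^'x" and N :: "real^'w^'x"
    and C :: "real^'x^'y" and Da :: "real^'a^'y" and Dac :: "real^'r^'q"
    and Fp :: "real^'q^'q" and Tp :: "real^'x^'q" and Kp :: "real^'y^'q" and Lp :: "real^'q^'q"
    and F :: "real^'x^'x" and T :: "real^'x^'x" and K K1 K2 H :: "real^'y^'x"
    and L :: "real^'q^'x"
  assumes F_def: "F = A - H ** C ** A - K1 ** C"
    and K2_def: "K2 = F ** H"
    and K_def: "K = K1 + K2"
    and c1: "T = mat 1 - H ** C"
    and c2: "(mat 1 - H ** C) ** F1 = 0"
    and c3: "(mat 1 - H ** C) ** F2 = 0"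
    and c4: "L ** Dac = 0"
    and c5: "Lp ** Dac = 0"
    and c6: "Kp ** Da = 0"
    and c7: "left_invertible C F L"
    and T1: "cps_traj A B Ba F1 F2 N C Da Dac Fp Tp Kp Lp F T K L x u ustar au f1 f2 w ay ac zc zp z"
    and x0: "x 0 = z 0 + H *v (C *v x 0)" and zp0: "zp 0 = zc 0"
    and w0: "\<forall>t\<ge>0. w t = 0"
    and r0: "\<forall>t\<ge>0. residual C H x z t = 0"
    and t: "t \<ge> 0"
  shows "Tp *v (Ba *v au t) = 0"
proof -
  define e where "e s = x s - (z s + H *v (C *v x s))" for s
  define ep where "ep s = zp s - zc s" for s
  have h1: "(x has_vector_derivative (A *v x s + B *v u s + Ba *v au s + F1 *v f1 s + F2 *v f2 s + N *v w s)) (at s within {0..})"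
      "B *v ustar s = B *v u s + Ba *v au s"
      "(zc has_vector_derivative (Fp *v zc s + Tp *v (B *v u s) + Kp *v (C *v x s + Da *v ay s))) (at s within {0..})"
      "(zp has_vector_derivative (Fp *v zp s + Tp *v (B *v ustar s) + Kp *v (C *v x s)
          + Lp *v (zp s - (zc s + Dac *v ac s)))) (at s within {0..})"
      "(z has_vector_derivative (F *v z s + T *v (B *v ustar s) + K *v (C *v x s)
          + L *v (zp s - (zc s + Dac *v ac s)))) (at s within {0..})"
    if s: "s \<ge> 0" for s
    using T1 s unfolding cps_traj_def by auto
  have de: "(e has_vector_derivative (F *v e s - L *v ep s)) (at s within {0..})" if s: "s \<ge> 0" for s
  proof -
    note E = e_deriv[where x=x and z=z and t=s and u=u and au=au and ?f1.0=f1 and ?f2.0=f2 and w=w and us=ustar and zp=zp and zc=zc and ac=ac, OF F_def K2_def K_def c1 c2 c3 c4 h1(1)[OF s] h1(2)[OF s] h1(5)[OF s]]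
    show ?thesis using E w0 s unfolding e_def ep_def by simp
  qed
  have ce: "C *v e s = 0" if "s \<ge> 0" for s
    using r0 that unfolding residual_def e_def by (simp add: matrix_vector_mult_diff_distrib)
  have e0: "e 0 = 0" unfolding e_def using x0 by simp
  have ep0: "ep s = 0" if "s \<ge> 0" for s
    by (rule li_zero[OF c7 de ce e0 that])
  have P: "(ep has_vector_derivative ((Fp + Lp) *v ep t + Tp *v (Ba *v au t))) (at t within {0..})"
    unfolding ep_def by (rule ep_deriv[where x=x and t=t and u=u and au=au and us=ustar and zp=zp and zc=zc and ac=ac and ay=ay, OF c5 c6 h1(2)[OF t] h1(3)[OF t] h1(4)[OF t]])
  have P0: "((\<lambda>s. 0) has_vector_derivative ((Fp + Lp) *v ep t + Tp *v (Ba *v au t))) (at t within {0..})"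
    by (rule has_vector_derivative_transform[OF _ _ P]) (use t ep0 in auto)
  have "(Fp + Lp) *v ep t + Tp *v (Ba *v au t) = 0"
    using vector_derivative_unique_within[OF not_bot_at_Ici[OF t] P0 has_vector_derivative_const] .
  then show ?thesis using ep0[OF t] by simp
qed


theorem proposition1:
  fixes A :: "real^'x^'x" and B :: "real^'u^'x" and Ba :: "real^'m^'x"
    and F1 :: "real^'f^'x" and F2 :: "real^'g^'x" and N :: "real^'w^'x"
    and C :: "real^'x^'y" and Da :: "real^'a^'y" and Dac :: "real^'r^'q"
    and Fp :: "real^'q^'q" and Tp :: "real^'x^'q" and Kp :: "real^'y^'q" and Lp :: "real^'q^'q"
    and F :: "real^'x^'x" and T :: "real^'x^'x" and K K1 K2 H :: "real^'y^'x"
    and L :: "real^'q^'x"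
  assumes rank_Dac: "rank Dac < CARD('q)"
    and F_def: "F = A - H ** C ** A - K1 ** C"
    and K2_def: "K2 = F ** H"
    and K_def: "K = K1 + K2"
    and c1: "T = mat 1 - H ** C"
    and c2: "(mat 1 - H ** C) ** F1 = 0"
    and c3: "(mat 1 - H ** C) ** F2 = 0"
    and c4: "L ** Dac = 0"
    and c5: "Lp ** Dac = 0"
    and c6: "Kp ** Da = 0"
    and c7: "left_invertible C F L"
    and c8: "minimum_phase (\<lambda>s. blk (mat s - cmat (Fp + Lp)) (- cmat (Tp ** Ba))
                                    (cmat L) (0 :: complex^'m^'x))"
    and c9: "rank (L ** Tp ** Ba) = rank (Tp ** Ba)"
    and c10: "hurwitz (blk F (- L) (0 :: real^'x^'q) (Fp + Lp))"
  shows
    \<comment> \<open>decoupling: the residual trajectory does not depend on a_y, f_1, f_2\<close>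
    "(\<forall>x u ustar au f1 f2 w ay ac zc zp z x' ustar' f1' f2' ay' zc' zp' z'.
        cps_traj A B Ba F1 F2 N C Da Dac Fp Tp Kp Lp F T K L x u ustar au f1 f2 w ay ac zc zp z
      \<and> cps_traj A B Ba F1 F2 N C Da Dac Fp Tp Kp Lp F T K L x' u ustar' au f1' f2' w ay' ac zc' zp' z'
      \<and> x' 0 = x 0 \<and> zc' 0 = zc 0 \<and> zp' 0 = zp 0 \<and> z' 0 = z 0
      \<longrightarrow> (\<forall>t\<ge>0. residual C H x' z' t = residual C H x z t))
    \<and>
    \<comment> \<open>sensitivity to a_u: an actuator attack that leaves the residual identically zero
        (zero initial estimation errors, no noise) cannot excite the filter discrepancy\<close>
    (\<forall>x u ustar au f1 f2 w ay ac zc zp z.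
        cps_traj A B Ba F1 F2 N C Da Dac Fp Tp Kp Lp F T K L x u ustar au f1 f2 w ay ac zc zp z
      \<and> x 0 = z 0 + H *v (C *v x 0) \<and> zp 0 = zc 0
      \<and> (\<forall>t\<ge>0. w t = 0)
      \<and> (\<forall>t\<ge>0. residual C H x z t = 0)
      \<longrightarrow> (\<forall>t\<ge>0. Tp *v (Ba *v au t) = 0))"
proof (intro conjI allI impI)
  fix x u ustar au f1 f2 w ay ac zc zp z x' ustar' f1' f2' ay' zc' zp' z' and t :: real
  assume H: "cps_traj A B Ba F1 F2 N C Da Dac Fp Tp Kp Lp F T K L x u ustar au f1 f2 w ay ac zc zp z \<and>
      cps_traj A B Ba F1 F2 N C Da Dac Fp Tp Kp Lp F T K L x' u ustar' au f1' f2' w ay' ac zc' zp' z' \<and>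
      x' 0 = x 0 \<and> zc' 0 = zc 0 \<and> zp' 0 = zp 0 \<and> z' 0 = z 0" and t: "0 \<le> t"
  then show "residual C H x' z' t = residual C H x z t"
    apply (elim conjE)
    apply (rule part1[OF F_def K2_def K_def c1 c2 c3 c4 c5 c6])
    apply assumption+
    done
next
  fix x u ustar au f1 f2 w ay ac zc zp z and t :: real
  assume H: "cps_traj A B Ba F1 F2 N C Da Dac Fp Tp Kp Lp F T K L x u ustar au f1 f2 w ay ac zc zp z \<and>
      x 0 = z 0 + H *v (C *v x 0) \<and> zp 0 = zc 0 \<and> (\<forall>t\<ge>0. w t = 0) \<and> (\<forall>t\<ge>0. residual C H x z t = 0)"
    and t: "0 \<le> t"
  then show "Tp *v (Ba *v au t) = 0"
    apply (elim conjE)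
    apply (rule part2[OF F_def K2_def K_def c1 c2 c3 c4 c5 c6 c7])
    apply assumption+
    done
qed

end
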